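(* For every preordered group $(G,P_G)$, the lattice of normal subobjects of $(G,P_G)$ in $\mathsf{PreOrdGrp}$ is modular: for normal subobjects $(A,P_A)$, $(B,P_B)$, $(C,P_C)$ of $(G,P_G)$ with $(C,P_C)\le(A,P_A)$, one has $(A,P_A)\wedge((B,P_B)\vee(C,P_C))=((A,P_A)\wedge(B,P_B))\vee(C,P_C)$.
   Context: A preordered group is a pair $(G,P_G)$ where $G$ is a group (additively written, not necessarily abelian) and $P_G\subseteq G$ is a submonoid closed under conjugation; morphisms $(G,P_G)\to(H,P_H)$ are group homomorphisms $f$ with $f(P_G)\subseteq P_H$. This is the category $\mathsf{PreOrdGrp}$. A normal subobject of $(G,P_G)$ is a subobject which is the kernel of some morphism; up to isomorphism these are exactly the pairs $(A,A\cap P_G)$ with $A$ a normal subgroup of $G$. Normal subobjects are ordered by inclusion; meet and join are taken in the poset of normal subobjects of $(G,P_G)$. *)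

theory Defs
  imports "HOL-Algebra.Algebra"
begin

text \<open>HOL-Algebra groups
  are written multiplicatively; the additive notation of the paper is purely
  notational (G need not be abelian).\<close>

definition preordered_group :: "('a, 'b) monoid_scheme \<Rightarrow> 'a set \<Rightarrow> bool" where
  "preordered_group G P \<longleftrightarrow>
     group G \<and> submonoid P G \<and>
     (\<forall>g \<in> carrier G. \<forall>p \<in> P. g \<otimes>\<^bsub>G\<^esub> p \<otimes>\<^bsub>G\<^esub> inv\<^bsub>G\<^esub> g \<in> P)"

text \<open>Normal subobjects of (G,P) (up to isomorphism): the pairs (A, A \<inter> P)
  with A a normal subgroup of G.\<close>

definition normal_subobjects :: "('a, 'b) monoid_scheme \<Rightarrow> 'a set \<Rightarrow> ('a set \<times> 'a set) set" where
  "normal_subobjects G P = {(A, A \<inter> P) | A. A \<lhd> G}"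

definition normal_subobject_poset ::
    "('a, 'b) monoid_scheme \<Rightarrow> 'a set \<Rightarrow> ('a set \<times> 'a set) gorder" where
  "normal_subobject_poset G P =
     \<lparr> carrier = normal_subobjects G P,
       eq = (=),
       le = (\<lambda>u v. fst u \<subseteq> fst v \<and> snd u \<subseteq> snd v) \<rparr>"

end

theory Submission
  imports Defs
begin

lemma nsp_po: "partial_order (normal_subobject_poset G P)"
  by unfold_locales (auto simp: normal_subobject_poset_def)

lemma nsp_carrier: "carrier (normal_subobject_poset G P) = {(A, A \<inter> P) | A. A \<lhd> G}"
  by (simp add: normal_subobject_poset_def normal_subobjects_def)

lemma nsp_le: "le (normal_subobject_poset G P) u v \<longleftrightarrow> fst u \<subseteq> fst v \<and> snd u \<subseteq> snd v"
  by (simp add: normal_subobject_poset_def)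

lemma setmult_sub:
  fixes G (structure)
  assumes "group G" "A \<lhd> G" "B \<lhd> G"
  shows "A \<subseteq> A <#>\<^bsub>G\<^esub> B" "B \<subseteq> A <#>\<^bsub>G\<^esub> B"
proof -
  interpret group G by fact
  have sA: "subgroup A G" "subgroup B G" using assms normal_imp_subgroup by auto
  show "A \<subseteq> A <#> B"
  proof
    fix a assume a: "a \<in> A"
    hence "a = a \<otimes> \<one>" using sA subgroup.mem_carrier by fastforce
    thus "a \<in> A <#> B" unfolding set_mult_def using a subgroup.one_closed[OF sA(2)] by blast
  qed
  show "B \<subseteq> A <#> B"
  proof
    fix a assume a: "a \<in> B"
    hence "a = \<one> \<otimes> a" using sA subgroup.mem_carrier by fastforce
    thus "a \<in> A <#> B" unfolding set_mult_def using a subgroup.one_closed[OF sA(1)] by blast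
  qed
qed

lemma setmult_least:
  assumes "group G" "C \<lhd> G" "A \<subseteq> C" "B \<subseteq> C"
  shows "A <#>\<^bsub>G\<^esub> B \<subseteq> C"
proof -
  interpret group G by fact
  have "subgroup C G" using assms normal_imp_subgroup by auto
  thus ?thesis using assms unfolding set_mult_def by (auto intro: subgroup.m_closed)
qed

lemma nsp_join:
  assumes "group G" "A \<lhd> G" "B \<lhd> G"
  shows "least (normal_subobject_poset G P) (A <#>\<^bsub>G\<^esub> B, (A <#>\<^bsub>G\<^esub> B) \<inter> P)
           (Upper (normal_subobject_poset G P) {(A, A \<inter> P), (B, B \<inter> P)})"
proof -
  have n: "A <#>\<^bsub>G\<^esub> B \<lhd> G" using group.normal_subgroup_set_mult_closed assms by blast
  let ?L = "normal_subobject_poset G P"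
  have s: "A \<subseteq> A <#>\<^bsub>G\<^esub> B" "B \<subseteq> A <#>\<^bsub>G\<^esub> B" using setmult_sub[OF assms] by auto
  have c: "(A <#>\<^bsub>G\<^esub> B, (A <#>\<^bsub>G\<^esub> B) \<inter> P) \<in> carrier ?L"
    unfolding nsp_carrier using n by blast
  have u: "(A <#>\<^bsub>G\<^esub> B, (A <#>\<^bsub>G\<^esub> B) \<inter> P) \<in> Upper ?L {(A, A \<inter> P), (B, B \<inter> P)}"
    unfolding Upper_def using c s by (auto simp: nsp_le)
  have l: "le ?L (A <#>\<^bsub>G\<^esub> B, (A <#>\<^bsub>G\<^esub> B) \<inter> P) x"
    if x: "x \<in> Upper ?L {(A, A \<inter> P), (B, B \<inter> P)}" for x
  proof -
    from x have xc: "x \<in> carrier ?L" and xa: "le ?L (A, A \<inter> P) x" and xb: "le ?L (B, B \<inter> P) x"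
      unfolding Upper_def using assms(2,3) by (auto simp: nsp_carrier)
    from xc obtain C where C: "x = (C, C \<inter> P)" "C \<lhd> G" unfolding nsp_carrier by blast
    have "A \<subseteq> C" "B \<subseteq> C" using xa xb C by (auto simp: nsp_le)
    hence "A <#>\<^bsub>G\<^esub> B \<subseteq> C" using setmult_least[OF assms(1) C(2)] by blast
    thus ?thesis using C by (auto simp: nsp_le)
  qed
  show ?thesis unfolding least_def using u l by blast
qed

lemma nsp_meet:
  assumes "group G" "A \<lhd> G" "B \<lhd> G"
  shows "greatest (normal_subobject_poset G P) (A \<inter> B, A \<inter> B \<inter> P)
           (Lower (normal_subobject_poset G P) {(A, A \<inter> P), (B, B \<inter> P)})"
proof -
  have n: "A \<inter> B \<lhd> G" using group.normal_subgroup_intersect assms by blast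
  let ?L = "normal_subobject_poset G P"
  have c: "(A \<inter> B, A \<inter> B \<inter> P) \<in> carrier ?L"
    unfolding nsp_carrier using n by blast
  have u: "(A \<inter> B, A \<inter> B \<inter> P) \<in> Lower ?L {(A, A \<inter> P), (B, B \<inter> P)}"
    unfolding Lower_def using c by (auto simp: nsp_le)
  have l: "le ?L x (A \<inter> B, A \<inter> B \<inter> P)"
    if x: "x \<in> Lower ?L {(A, A \<inter> P), (B, B \<inter> P)}" for x
  proof -
    from x have xc: "x \<in> carrier ?L" and xa: "le ?L x (A, A \<inter> P)" and xb: "le ?L x (B, B \<inter> P)"
      unfolding Lower_def using assms(2,3) by (auto simp: nsp_carrier)
    from xc obtain C where C: "x = (C, C \<inter> P)" "C \<lhd> G" unfolding nsp_carrier by blast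
    have "C \<subseteq> A" "C \<subseteq> B" using xa xb C by (auto simp: nsp_le)
    thus ?thesis using C by (auto simp: nsp_le)
  qed
  show ?thesis unfolding greatest_def using u l by blast
qed

lemma dedekind:
  fixes G (structure)
  assumes "group G" "A \<lhd> G" "B \<lhd> G" "C \<lhd> G" "C \<subseteq> A"
  shows "A \<inter> (B <#>\<^bsub>G\<^esub> C) = (A \<inter> B) <#>\<^bsub>G\<^esub> C"
proof
  interpret group G by fact
  have sA: "subgroup A G" "subgroup B G" "subgroup C G" using assms normal_imp_subgroup by auto
  show "A \<inter> (B <#> C) \<subseteq> (A \<inter> B) <#> C"
  proof
    fix x assume x: "x \<in> A \<inter> (B <#> C)"
    then obtain b c where bc: "b \<in> B" "c \<in> C" "x = b \<otimes> c" unfolding set_mult_def by blast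
    have cb: "b \<in> carrier G" "c \<in> carrier G" using bc sA subgroup.mem_carrier by fastforce+
    have "b = x \<otimes> inv c" using bc cb by (simp add: m_assoc)
    moreover have "x \<otimes> inv c \<in> A" using x bc assms(5) sA(1)
      by (auto intro: subgroup.m_closed subgroup.m_inv_closed)
    ultimately have "b \<in> A" by simp
    thus "x \<in> (A \<inter> B) <#> C" unfolding set_mult_def using bc by blast
  qed
  show "(A \<inter> B) <#> C \<subseteq> A \<inter> (B <#> C)"
  proof
    fix x assume "x \<in> (A \<inter> B) <#> C"
    then obtain b c where bc: "b \<in> A \<inter> B" "c \<in> C" "x = b \<otimes> c" unfolding set_mult_def by blast
    have "x \<in> A" using bc assms(5) sA(1) by (auto intro: subgroup.m_closed)
    moreover have "x \<in> B <#> C" unfolding set_mult_def using bc by blast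
    ultimately show "x \<in> A \<inter> (B <#> C)" by blast
  qed
qed

theorem proposition2p5:
  fixes G :: "('a, 'b) monoid_scheme" and P :: "'a set"
  assumes "preordered_group G P"
  defines "L \<equiv> normal_subobject_poset G P"
  shows "lattice L \<and>
    (\<forall>N1 \<in> carrier L. \<forall>N2 \<in> carrier L. \<forall>N3 \<in> carrier L.
       N3 \<sqsubseteq>\<^bsub>L\<^esub> N1 \<longrightarrow>
       N1 \<sqinter>\<^bsub>L\<^esub> (N2 \<squnion>\<^bsub>L\<^esub> N3) = (N1 \<sqinter>\<^bsub>L\<^esub> N2) \<squnion>\<^bsub>L\<^esub> N3)"
proof -
  have grp: "group G" using assms(1) unfolding preordered_group_def by blast
  interpret po: partial_order L unfolding L_def by (rule nsp_po)
  have lat: "lattice L"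
  proof (intro lattice.intro upper_semilattice.intro lower_semilattice.intro
      upper_semilattice_axioms.intro lower_semilattice_axioms.intro)
    show "partial_order L" by (rule po.partial_order_axioms)
    show "partial_order L" by (rule po.partial_order_axioms)
    fix x y assume "x \<in> carrier L" "y \<in> carrier L"
    then obtain A B where "x = (A, A \<inter> P)" "y = (B, B \<inter> P)" "A \<lhd> G" "B \<lhd> G"
      unfolding L_def nsp_carrier by blast
    thus "\<exists>s. least L s (Upper L {x, y})" "\<exists>s. greatest L s (Lower L {x, y})"
      using nsp_join[OF grp] nsp_meet[OF grp] unfolding L_def by blast+
  qed
  interpret lattice L by (rule lat)
  have J: "(A, A \<inter> P) \<squnion>\<^bsub>L\<^esub> (B, B \<inter> P) = (A <#>\<^bsub>G\<^esub> B, (A <#>\<^bsub>G\<^esub> B) \<inter> P)"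
    if "A \<lhd> G" "B \<lhd> G" for A B
  proof -
    have c: "(A, A \<inter> P) \<in> carrier L" "(B, B \<inter> P) \<in> carrier L"
      using that unfolding L_def nsp_carrier by auto
    show ?thesis unfolding join_def
      using po.least_unique[OF sup_of_two_least[OF c] nsp_join[OF grp that, of P, folded L_def]] .
  qed
  have M: "(A, A \<inter> P) \<sqinter>\<^bsub>L\<^esub> (B, B \<inter> P) = (A \<inter> B, A \<inter> B \<inter> P)"
    if "A \<lhd> G" "B \<lhd> G" for A B
  proof -
    have c: "(A, A \<inter> P) \<in> carrier L" "(B, B \<inter> P) \<in> carrier L"
      using that unfolding L_def nsp_carrier by auto
    show ?thesis unfolding meet_def
      using po.greatest_unique[OF inf_of_two_greatest[OF c] nsp_meet[OF grp that, of P, folded L_def]] .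
  qed
  have "N1 \<sqinter>\<^bsub>L\<^esub> (N2 \<squnion>\<^bsub>L\<^esub> N3) = (N1 \<sqinter>\<^bsub>L\<^esub> N2) \<squnion>\<^bsub>L\<^esub> N3"
    if hN: "N1 \<in> carrier L" "N2 \<in> carrier L" "N3 \<in> carrier L" "N3 \<sqsubseteq>\<^bsub>L\<^esub> N1" for N1 N2 N3
  proof -
    obtain A B C where abc: "N1 = (A, A \<inter> P)" "N2 = (B, B \<inter> P)" "N3 = (C, C \<inter> P)"
      "A \<lhd> G" "B \<lhd> G" "C \<lhd> G"
      using hN(1-3) unfolding L_def nsp_carrier by blast
    have CA: "C \<subseteq> A" using hN(4) abc unfolding L_def by (simp add: nsp_le)
    have nBC: "B <#>\<^bsub>G\<^esub> C \<lhd> G" using group.normal_subgroup_set_mult_closed grp abc by blast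
    have nAB: "A \<inter> B \<lhd> G" using group.normal_subgroup_intersect grp abc by blast
    have "N1 \<sqinter>\<^bsub>L\<^esub> (N2 \<squnion>\<^bsub>L\<^esub> N3) = (A \<inter> (B <#>\<^bsub>G\<^esub> C), A \<inter> (B <#>\<^bsub>G\<^esub> C) \<inter> P)"
      using abc J M nBC by simp
    also have "\<dots> = ((A \<inter> B) <#>\<^bsub>G\<^esub> C, ((A \<inter> B) <#>\<^bsub>G\<^esub> C) \<inter> P)"
      using dedekind[OF grp abc(4-6) CA] by simp
    also have "\<dots> = (N1 \<sqinter>\<^bsub>L\<^esub> N2) \<squnion>\<^bsub>L\<^esub> N3"
      using abc J M nAB by simp
    finally show ?thesis .
  qed
  thus ?thesis using lat by blast
qed

end
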